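(* Let $\mathcal{E}=[\theta,u]$ be an interval effect algebra with an order-determining set of states $\mathcal{S}(\mathcal{E})$. For $a,b\in\mathcal{E}$ and $\beta\in\mathcal{S}(\mathcal{E})$ define $a[\beta]b=\beta(b)a\in\mathcal{E}$. Then for all $a,b,c\in\mathcal{E}$ and $\alpha,\beta\in\mathcal{S}(\mathcal{E})$: (i) the maps $b\mapsto a[\beta]b$ and $a\mapsto a[\beta]b$ preserve convex combinations and are additive (e.g. $a[\beta](b+c)=a[\beta]b+a[\beta]c$ whenever $b+c\le u$, and $(a+c)[\beta]b=a[\beta]b+c[\beta]b$ whenever $a+c\le u$); (ii) $\theta[\beta]b=b[\beta]\theta=\theta$; (iii) $a[\beta]u=a$, $u[\beta]b=\beta(b)u$, and $u[\beta]b=b$ if and only if $b=\lambda u$ for some $\lambda\in[0,1]$; (iv) $a[\beta]b\le a$; (v) $a[\alpha](b[\beta]c)=(a[\alpha]b)[\beta]c$; (vi) $a[\alpha]b=\theta$ does not in general imply $b[\alpha]a=\theta$: there exist such an $\mathcal{E}$, a state $\alpha$, and $a,b\in\mathcal{E}$ with $a[\alpha]b=\theta$ but $b[\alpha]a\ne\theta$.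
   Context: Let $V$ be a real vector space with zero $\theta$ and $K\subseteq V$ a positive cone ($\mathbb{R}^+K\subseteq K$, $K+K\subseteq K$, $K\cap(-K)=\{\theta\}$), ordered by $x\le y$ iff $y-x\in K$. For $u\in K$, $u\ne\theta$, the interval effect algebra is $\mathcal{E}=[\theta,u]=\{x\in K:x\le u\}$; $a\perp b$ means $a+b\le u$. A state is $s\colon\mathcal{E}\to[0,1]$ with $s(u)=1$ and $s(a+b)=s(a)+s(b)$ when $a\perp b$; $\mathcal{S}(\mathcal{E})$ is the set of all states, assumed order-determining ($a\le b$ iff $s(a)\le s(b)$ for all states $s$). *)

theory Defs
  imports "HOL-Analysis.Analysis"
begin

definition positive_cone :: "'v::real_vector set \<Rightarrow> bool" where
  "positive_cone K \<longleftrightarrow>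
     (\<forall>r::real. \<forall>x\<in>K. 0 < r \<longrightarrow> r *\<^sub>R x \<in> K) \<and>
     (\<forall>x\<in>K. \<forall>y\<in>K. x + y \<in> K) \<and>
     K \<inter> uminus ` K = {0}"

definition cone_le :: "'v::real_vector set \<Rightarrow> 'v \<Rightarrow> 'v \<Rightarrow> bool" where
  "cone_le K x y \<longleftrightarrow> y - x \<in> K"

definition interval_ea :: "'v::real_vector set \<Rightarrow> 'v \<Rightarrow> 'v set" where
  "interval_ea K u = {x \<in> K. cone_le K x u}"

text \<open>A state on the interval effect algebra [0,u]; only its values on [0,u] matter.\<close>
definition is_state :: "'v::real_vector set \<Rightarrow> 'v \<Rightarrow> ('v \<Rightarrow> real) \<Rightarrow> bool" where
  "is_state K u s \<longleftrightarrow>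
     (\<forall>a\<in>interval_ea K u. 0 \<le> s a \<and> s a \<le> 1) \<and>
     s u = 1 \<and>
     (\<forall>a\<in>interval_ea K u. \<forall>b\<in>interval_ea K u.
        cone_le K (a + b) u \<longrightarrow> s (a + b) = s a + s b)"

definition order_determining :: "'v::real_vector set \<Rightarrow> 'v \<Rightarrow> bool" where
  "order_determining K u \<longleftrightarrow>
     (\<forall>a\<in>interval_ea K u. \<forall>b\<in>interval_ea K u.
        cone_le K a b \<longleftrightarrow> (\<forall>s. is_state K u s \<longrightarrow> s a \<le> s b))"

definition seqop :: "('v::real_vector \<Rightarrow> real) \<Rightarrow> 'v \<Rightarrow> 'v \<Rightarrow> 'v" where
  "seqop \<beta> a b = \<beta> b *\<^sub>R a"

end

theory Submission
  imports Defs
begin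

lemma pc_zero: "positive_cone K \<Longrightarrow> 0 \<in> K"
  unfolding positive_cone_def by blast

lemma pc_scale: "positive_cone K \<Longrightarrow> x \<in> K \<Longrightarrow> (r::real) \<ge> 0 \<Longrightarrow> r *\<^sub>R x \<in> K"
  using pc_zero[of K] unfolding positive_cone_def
  by (cases "r = 0") auto

lemma pc_add: "positive_cone K \<Longrightarrow> x \<in> K \<Longrightarrow> y \<in> K \<Longrightarrow> x + y \<in> K"
  unfolding positive_cone_def by blast

lemma int_iff: "x \<in> interval_ea K u \<longleftrightarrow> x \<in> K \<and> u - x \<in> K"
  unfolding interval_ea_def cone_le_def by auto

lemma int_scale:
  assumes "positive_cone K" "x \<in> interval_ea K u" "0 \<le> r" "r \<le> (1::real)"
  shows "r *\<^sub>R x \<in> interval_ea K u"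
proof -
  have xK: "x \<in> K" "u - x \<in> K" using assms(2) int_iff by auto
  have eq: "u - r *\<^sub>R x = (u - x) + (1 - r) *\<^sub>R x" by (simp add: algebra_simps)
  have "(u - x) + (1 - r) *\<^sub>R x \<in> K"
    using pc_add[OF assms(1) xK(2) pc_scale[OF assms(1) xK(1)]] assms by simp
  hence "u - r *\<^sub>R x \<in> K" unfolding eq[symmetric] .
  then show ?thesis unfolding int_iff using pc_scale[OF assms(1) xK(1) assms(3)] by simp
qed

lemma st_zero:
  assumes "positive_cone K" "u \<in> K" "is_state K u s"
  shows "s 0 = 0"
proof -
  have "0 \<in> interval_ea K u" using assms pc_zero int_iff by fastforce
  moreover have "cone_le K (0 + 0) u" using assms unfolding cone_le_def by simp
  ultimately have "s (0+0) = s 0 + s 0" using assms(3) unfolding is_state_def by blast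
  thus ?thesis by simp
qed

lemma st_mono:
  assumes "positive_cone K" "is_state K u s" "x \<in> interval_ea K u" "y \<in> interval_ea K u"
    "y - x \<in> K"
  shows "s x \<le> s y"
proof -
  have d: "y - x \<in> interval_ea K u"
  proof -
    have eq: "u - (y - x) = (u - y) + x" by simp
    have "(u - y) + x \<in> K" using pc_add[OF assms(1), of "u - y" x] assms(3,4) unfolding int_iff by simp
    hence "u - (y - x) \<in> K" unfolding eq .
    thus ?thesis unfolding int_iff using assms(5) by simp
  qed
  have "cone_le K (x + (y - x)) u" using assms(4) unfolding int_iff cone_le_def by simp
  hence "s (x + (y - x)) = s x + s (y - x)" using assms(2,3) d unfolding is_state_def by blast
  moreover have "s (y - x) \<ge> 0" using assms(2) d unfolding is_state_def by blast
  ultimately show ?thesis by simp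
qed

lemma st_rat:
  assumes "positive_cone K" "is_state K u s" "x \<in> interval_ea K u" "(m::nat) > 0"
  shows "k \<le> m \<Longrightarrow> s ((real k / real m) *\<^sub>R x) = real k * s ((1 / real m) *\<^sub>R x)"
proof (induction k)
  case 0
  have eq: "u = (u - x) + x" by simp
  have "(u - x) + x \<in> K" using pc_add[OF assms(1), of "u - x" x] assms(3) unfolding int_iff by simp
  hence "u \<in> K" using eq by simp
  then show ?case using st_zero assms by simp
next
  case (Suc k)
  have e: "(real (Suc k) / real m) *\<^sub>R x = (real k / real m) *\<^sub>R x + (1 / real m) *\<^sub>R x"
    by (simp add: scaleR_add_left[symmetric] add_divide_distrib)
  have i1: "(real k / real m) *\<^sub>R x \<in> interval_ea K u"
    using Suc assms by (intro int_scale) auto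
  have i2: "(1 / real m) *\<^sub>R x \<in> interval_ea K u"
    using Suc assms by (intro int_scale) auto
  have i3: "(real (Suc k) / real m) *\<^sub>R x \<in> interval_ea K u"
    using Suc assms by (intro int_scale) auto
  hence "cone_le K ((real k / real m) *\<^sub>R x + (1 / real m) *\<^sub>R x) u"
    using i3 unfolding e int_iff cone_le_def by simp
  hence "s ((real k / real m) *\<^sub>R x + (1 / real m) *\<^sub>R x)
      = s ((real k / real m) *\<^sub>R x) + s ((1 / real m) *\<^sub>R x)"
    using assms(2) i1 i2 unfolding is_state_def by blast
  then show ?case using e Suc by (simp add: algebra_simps)
qed

lemma st_rat2:
  assumes "positive_cone K" "is_state K u s" "x \<in> interval_ea K u" "(m::nat) > 0" "k \<le> m"
  shows "s ((real k / real m) *\<^sub>R x) = (real k / real m) * s x"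
proof -
  have "s ((real m / real m) *\<^sub>R x) = real m * s ((1 / real m) *\<^sub>R x)"
    using st_rat[OF assms(1-4), of m] assms(4) by simp
  hence "s ((1 / real m) *\<^sub>R x) = s x / real m" using assms(4) by simp
  thus ?thesis using st_rat[OF assms(1-4) assms(5)] by simp
qed

lemma pc_diff_scale:
  assumes "positive_cone K" "x \<in> K" "p \<le> (q::real)"
  shows "q *\<^sub>R x - p *\<^sub>R x \<in> K"
proof -
  have "q *\<^sub>R x - p *\<^sub>R x = (q - p) *\<^sub>R x" by (simp add: algebra_simps)
  thus ?thesis using pc_scale[OF assms(1,2), of "q-p"] assms(3) by simp
qed

lemma st_hom:
  assumes "positive_cone K" "is_state K u s" "x \<in> interval_ea K u" "0 \<le> r" "r \<le> (1::real)"
  shows "s (r *\<^sub>R x) = r * s x"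
proof -
  have xK: "x \<in> K" using assms int_iff by auto
  have sx: "0 \<le> s x" "s x \<le> 1" using assms(2,3) unfolding is_state_def by auto
  have ri: "r *\<^sub>R x \<in> interval_ea K u" using int_scale assms by auto
  have bound: "\<bar>s (r *\<^sub>R x) - r * s x\<bar> \<le> 1 / real m" if m: "m > 0" for m :: nat
  proof -
    define k where "k = nat \<lfloor>r * real m\<rfloor>"
    have k1: "real k \<le> r * real m" using assms(4) m unfolding k_def by simp
    have k2: "r * real m < real k + 1" using assms(4) m unfolding k_def by linarith
    have "r * real m \<le> 1 * real m" using mult_right_mono[OF assms(5), of "real m"] by simp
    hence "real k \<le> real m" using k1 by linarith
    hence km: "k \<le> m" by simp
    show ?thesis
    proof (cases "k = m")
      case True
      hence "r = 1" using k1 assms(5) m by simp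
      then show ?thesis by simp
    next
      case False
      hence km': "Suc k \<le> m" using km by simp
      have q1: "real k / real m \<le> r" using k1 m by (simp add: divide_le_eq mult.commute)
      have q2: "r \<le> real (Suc k) / real m" using k2 m by (simp add: le_divide_eq)
      have a1: "s ((real k / real m) *\<^sub>R x) \<le> s (r *\<^sub>R x)"
        using st_mono[OF assms(1,2) _ ri] int_scale[OF assms(1,3)] pc_diff_scale[OF assms(1) xK q1] m km
        by simp
      have a2: "s (r *\<^sub>R x) \<le> s ((real (Suc k) / real m) *\<^sub>R x)"
        using st_mono[OF assms(1,2) ri] int_scale[OF assms(1,3)] pc_diff_scale[OF assms(1) xK q2] m km'
        by (simp del: of_nat_Suc)
      have b1: "real k / real m * s x \<le> r * s x" using q1 sx mult_right_mono by blast
      have b2: "r * s x \<le> real (Suc k) / real m * s x" using q2 sx mult_right_mono by blast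
      have r1: "s ((real k / real m) *\<^sub>R x) = real k / real m * s x"
        using st_rat2[OF assms(1-3) m km] .
      have r2: "s ((real (Suc k) / real m) *\<^sub>R x) = real (Suc k) / real m * s x"
        using st_rat2[OF assms(1-3) m km'] .
      have "real (Suc k) / real m * s x - real k / real m * s x = s x / real m"
        using m by (simp add: field_simps)
      also have "\<dots> \<le> 1 / real m" using sx m by (simp add: divide_right_mono)
      finally show ?thesis using a1 a2 b1 b2 r1 r2 by linarith
    qed
  qed
  show ?thesis
  proof (rule ccontr)
    assume "s (r *\<^sub>R x) \<noteq> r * s x"
    hence "\<bar>s (r *\<^sub>R x) - r * s x\<bar> > 0" by simp
    then obtain n where n: "n > 0" "inverse (real n) < \<bar>s (r *\<^sub>R x) - r * s x\<bar>"
      using ex_inverse_of_nat_less by blast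
    with bound[OF n(1)] show False by (simp add: inverse_eq_divide)
  qed
qed


definition Q :: "(real \<times> real) set" where "Q = {p. fst p \<ge> 0 \<and> snd p \<ge> 0}"

lemma Q_cone: "positive_cone Q"
  unfolding positive_cone_def Q_def
proof (intro conjI ballI allI impI)
  show "{p::real\<times>real. 0 \<le> fst p \<and> 0 \<le> snd p} \<inter> uminus ` {p. 0 \<le> fst p \<and> 0 \<le> snd p} = {0}"
  proof
    show "{p::real\<times>real. 0 \<le> fst p \<and> 0 \<le> snd p} \<inter> uminus ` {p. 0 \<le> fst p \<and> 0 \<le> snd p} \<subseteq> {0}"
      by (auto simp: prod_eq_iff)
    show "{0} \<subseteq> {p::real\<times>real. 0 \<le> fst p \<and> 0 \<le> snd p} \<inter> uminus ` {p. 0 \<le> fst p \<and> 0 \<le> snd p}"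
      by (auto intro!: image_eqI[where x=0])
  qed
qed auto

lemma Q_int: "p \<in> interval_ea Q (1,1) \<longleftrightarrow> 0 \<le> fst p \<and> fst p \<le> 1 \<and> 0 \<le> snd p \<and> snd p \<le> 1"
  unfolding int_iff Q_def by auto

lemma Q_fst: "is_state Q (1,1) fst"
  unfolding is_state_def by (auto simp: Q_int)

lemma Q_snd: "is_state Q (1,1) snd"
  unfolding is_state_def by (auto simp: Q_int)

lemma Q_od: "order_determining Q (1,1)"
  unfolding order_determining_def
proof (intro ballI iffI allI impI)
  fix a b s assume "a \<in> interval_ea Q (1,1)" "b \<in> interval_ea Q (1,1)" "cone_le Q a b" "is_state Q (1,1) s"
  then show "s a \<le> s b" using st_mono[OF Q_cone] unfolding cone_le_def by blast
next
  fix a b assume "\<forall>s. is_state Q (1, 1) s \<longrightarrow> s a \<le> s b"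
  then have "fst a \<le> fst b" "snd a \<le> snd b" using Q_fst Q_snd by auto
  then show "cone_le Q a b" unfolding cone_le_def Q_def by simp
qed

lemma part2:
  "\<exists>(K'::(real \<times> real) set) u' \<alpha> a b.
       positive_cone K' \<and> u' \<in> K' \<and> u' \<noteq> 0 \<and> order_determining K' u' \<and>
       is_state K' u' \<alpha> \<and> a \<in> interval_ea K' u' \<and> b \<in> interval_ea K' u' \<and>
       seqop \<alpha> a b = 0 \<and> seqop \<alpha> b a \<noteq> 0"
proof (intro exI conjI)
  show "positive_cone Q" by (rule Q_cone)
  show "(1,1) \<in> Q" unfolding Q_def by simp
  show "((1,1)::real\<times>real) \<noteq> 0" by (simp add: prod_eq_iff)
  show "order_determining Q (1,1)" by (rule Q_od)
  show "is_state Q (1,1) fst" by (rule Q_fst)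
  show "(1::real,0::real) \<in> interval_ea Q (1,1)" unfolding Q_int by simp
  show "(0::real,1::real) \<in> interval_ea Q (1,1)" unfolding Q_int by simp
  show "seqop fst (1::real,0::real) (0,1) = 0" unfolding seqop_def by (simp add: zero_prod_def)
  show "seqop fst (0::real,1::real) (1,0) \<noteq> 0" unfolding seqop_def by (simp add: prod_eq_iff zero_prod_def)
qed

theorem lemma4p2:
  fixes K :: "'v::real_vector set" and u :: 'v
  assumes cone: "positive_cone K"
    and uK: "u \<in> K" and u0: "u \<noteq> 0"
    and od: "order_determining K u"
  shows
   "(\<forall>\<alpha> \<beta> a b c. is_state K u \<alpha> \<longrightarrow> is_state K u \<beta> \<longrightarrow>
       a \<in> interval_ea K u \<longrightarrow> b \<in> interval_ea K u \<longrightarrow> c \<in> interval_ea K u \<longrightarrow>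
       seqop \<beta> a b \<in> interval_ea K u \<and>
       (\<forall>l::real. 0 \<le> l \<and> l \<le> 1 \<longrightarrow>
          seqop \<beta> a (l *\<^sub>R b + (1 - l) *\<^sub>R c)
            = l *\<^sub>R seqop \<beta> a b + (1 - l) *\<^sub>R seqop \<beta> a c \<and>
          seqop \<beta> (l *\<^sub>R a + (1 - l) *\<^sub>R c) b
            = l *\<^sub>R seqop \<beta> a b + (1 - l) *\<^sub>R seqop \<beta> c b) \<and>
       (cone_le K (b + c) u \<longrightarrow> seqop \<beta> a (b + c) = seqop \<beta> a b + seqop \<beta> a c) \<and>
       (cone_le K (a + c) u \<longrightarrow> seqop \<beta> (a + c) b = seqop \<beta> a b + seqop \<beta> c b) \<and>
       seqop \<beta> 0 b = 0 \<and> seqop \<beta> b 0 = 0 \<and>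
       seqop \<beta> a u = a \<and> seqop \<beta> u b = \<beta> b *\<^sub>R u \<and>
       (seqop \<beta> u b = b \<longleftrightarrow> (\<exists>l::real. 0 \<le> l \<and> l \<le> 1 \<and> b = l *\<^sub>R u)) \<and>
       cone_le K (seqop \<beta> a b) a \<and>
       seqop \<alpha> a (seqop \<beta> b c) = seqop \<beta> (seqop \<alpha> a b) c)
    \<and>
    (\<exists>(K'::(real \<times> real) set) u' \<alpha> a b.
       positive_cone K' \<and> u' \<in> K' \<and> u' \<noteq> 0 \<and> order_determining K' u' \<and>
       is_state K' u' \<alpha> \<and> a \<in> interval_ea K' u' \<and> b \<in> interval_ea K' u' \<and>
       seqop \<alpha> a b = 0 \<and> seqop \<alpha> b a \<noteq> 0)"
proof (rule conjI[OF _ part2], intro allI impI)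
  fix \<alpha> \<beta> :: "'v \<Rightarrow> real" and a b c
  assume sa: "is_state K u \<alpha>" and sb: "is_state K u \<beta>"
    and a: "a \<in> interval_ea K u" and b: "b \<in> interval_ea K u" and c: "c \<in> interval_ea K u"
  have uI: "u \<in> interval_ea K u" using uK pc_zero[OF cone] unfolding int_iff by simp
  have bb: "0 \<le> \<beta> b" "\<beta> b \<le> 1" using sb b unfolding is_state_def by auto
  have ab: "0 \<le> \<alpha> b" "\<alpha> b \<le> 1" using sa b unfolding is_state_def by auto
  have bc: "0 \<le> \<beta> c" "\<beta> c \<le> 1" using sb c unfolding is_state_def by auto
  have b0: "\<beta> 0 = 0" using st_zero[OF cone uK sb] .
  have bu: "\<beta> u = 1" using sb unfolding is_state_def by simp
  have cvx: "\<beta> (l *\<^sub>R b + (1 - l) *\<^sub>R c) = l * \<beta> b + (1 - l) * \<beta> c" if l: "0 \<le> l" "l \<le> 1" for l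
  proof -
    have i1: "l *\<^sub>R b \<in> interval_ea K u" using int_scale[OF cone b] l by simp
    have i2: "(1 - l) *\<^sub>R c \<in> interval_ea K u" using int_scale[OF cone c] l by simp
    have bK: "u - b \<in> K" and cK: "u - c \<in> K" using b c int_iff by auto
    have "u - (l *\<^sub>R b + (1 - l) *\<^sub>R c) = l *\<^sub>R (u - b) + (1 - l) *\<^sub>R (u - c)"
      by (simp add: algebra_simps)
    moreover have "l *\<^sub>R (u - b) + (1 - l) *\<^sub>R (u - c) \<in> K"
      using pc_add[OF cone pc_scale[OF cone bK] pc_scale[OF cone cK]] l by simp
    ultimately have "cone_le K (l *\<^sub>R b + (1 - l) *\<^sub>R c) u" unfolding cone_le_def by simp
    hence "\<beta> (l *\<^sub>R b + (1 - l) *\<^sub>R c) = \<beta> (l *\<^sub>R b) + \<beta> ((1 - l) *\<^sub>R c)"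
      using sb i1 i2 unfolding is_state_def by blast
    thus ?thesis using st_hom[OF cone sb b] st_hom[OF cone sb c] l by simp
  qed
  have uiff: "seqop \<beta> u b = b \<longleftrightarrow> (\<exists>l::real. 0 \<le> l \<and> l \<le> 1 \<and> b = l *\<^sub>R u)"
  proof
    assume "seqop \<beta> u b = b"
    then have "b = \<beta> b *\<^sub>R u" unfolding seqop_def by simp
    then show "\<exists>l::real. 0 \<le> l \<and> l \<le> 1 \<and> b = l *\<^sub>R u" using bb by blast
  next
    assume "\<exists>l::real. 0 \<le> l \<and> l \<le> 1 \<and> b = l *\<^sub>R u"
    then obtain l where l: "0 \<le> l" "l \<le> 1" "b = l *\<^sub>R u" by blast
    then show "seqop \<beta> u b = b" unfolding seqop_def using st_hom[OF cone sb uI l(1,2)] bu by simp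
  qed
  have aK: "a \<in> K" using a int_iff by auto
  show "seqop \<beta> a b \<in> interval_ea K u \<and>
       (\<forall>l::real. 0 \<le> l \<and> l \<le> 1 \<longrightarrow>
          seqop \<beta> a (l *\<^sub>R b + (1 - l) *\<^sub>R c)
            = l *\<^sub>R seqop \<beta> a b + (1 - l) *\<^sub>R seqop \<beta> a c \<and>
          seqop \<beta> (l *\<^sub>R a + (1 - l) *\<^sub>R c) b
            = l *\<^sub>R seqop \<beta> a b + (1 - l) *\<^sub>R seqop \<beta> c b) \<and>
       (cone_le K (b + c) u \<longrightarrow> seqop \<beta> a (b + c) = seqop \<beta> a b + seqop \<beta> a c) \<and>
       (cone_le K (a + c) u \<longrightarrow> seqop \<beta> (a + c) b = seqop \<beta> a b + seqop \<beta> c b) \<and>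
       seqop \<beta> 0 b = 0 \<and> seqop \<beta> b 0 = 0 \<and>
       seqop \<beta> a u = a \<and> seqop \<beta> u b = \<beta> b *\<^sub>R u \<and>
       (seqop \<beta> u b = b \<longleftrightarrow> (\<exists>l::real. 0 \<le> l \<and> l \<le> 1 \<and> b = l *\<^sub>R u)) \<and>
       cone_le K (seqop \<beta> a b) a \<and>
       seqop \<alpha> a (seqop \<beta> b c) = seqop \<beta> (seqop \<alpha> a b) c"
  proof (intro conjI allI impI)
    show "seqop \<beta> a b \<in> interval_ea K u" unfolding seqop_def using int_scale[OF cone a bb] .
  next
    fix l :: real assume "0 \<le> l \<and> l \<le> 1"
    then show "seqop \<beta> a (l *\<^sub>R b + (1 - l) *\<^sub>R c) = l *\<^sub>R seqop \<beta> a b + (1 - l) *\<^sub>R seqop \<beta> a c"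
      unfolding seqop_def using cvx by (simp add: scaleR_add_left)
  next
    fix l :: real
    show "seqop \<beta> (l *\<^sub>R a + (1 - l) *\<^sub>R c) b = l *\<^sub>R seqop \<beta> a b + (1 - l) *\<^sub>R seqop \<beta> c b"
      unfolding seqop_def by (simp add: scaleR_add_right mult.commute)
  next
    assume "cone_le K (b + c) u"
    then have "\<beta> (b + c) = \<beta> b + \<beta> c" using sb b c unfolding is_state_def by blast
    then show "seqop \<beta> a (b + c) = seqop \<beta> a b + seqop \<beta> a c"
      unfolding seqop_def by (simp add: scaleR_add_left)
  next
    show "seqop \<beta> (a + c) b = seqop \<beta> a b + seqop \<beta> c b"
      unfolding seqop_def by (simp add: scaleR_add_right)
  next
    show "seqop \<beta> 0 b = 0" unfolding seqop_def by simp
    show "seqop \<beta> b 0 = 0" unfolding seqop_def using b0 by simp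
    show "seqop \<beta> a u = a" unfolding seqop_def using bu by simp
    show "seqop \<beta> u b = \<beta> b *\<^sub>R u" unfolding seqop_def by simp
    show "seqop \<beta> u b = b \<longleftrightarrow> (\<exists>l::real. 0 \<le> l \<and> l \<le> 1 \<and> b = l *\<^sub>R u)" by (rule uiff)
    show "cone_le K (seqop \<beta> a b) a"
      unfolding seqop_def cone_le_def using pc_diff_scale[OF cone aK bb(2)] by simp
    show "seqop \<alpha> a (seqop \<beta> b c) = seqop \<beta> (seqop \<alpha> a b) c"
      unfolding seqop_def using st_hom[OF cone sa b bc] by simp
  qed
qed

end
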